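(* Let $n\ge3$ and $A\subseteq[n]$. If $n-1\in A$, then $f_n(A\setminus\{n-1\})\ge f_n(A)$. If $2\notin A$, then $f_n(A\cup\{2\})\ge f_n(A)$.
   Context: For $m\ge1$ and a set $B$ of positive integers, $f_m(B)$ denotes the number of linear orders $q$ on $[m]$ such that for every triple $i<j<k$ in $[m]$: if $j\in B$ then $i$ is not ranked last among $\{i,j,k\}$ in $q$, and if $j\notin B$ then $k$ is not ranked first among $\{i,j,k\}$ in $q$. *)

theory Defs
  imports Main
begin

text \<open>A linear order q on [m] = {1..m} is a relation with linear_order_on {1..m} q
  (library notion, reflexive); (x,y) \<in> q means x is ranked no later than y.
  "x ranked last among {i,j,k}" means the other two are below x in q;
  "x ranked first" means x is below the other two.\<close>

definition ranked_last :: "nat rel \<Rightarrow> nat \<Rightarrow> nat \<Rightarrow> nat \<Rightarrow> nat \<Rightarrow> bool" where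
  "ranked_last q x i j k \<longleftrightarrow> (\<forall>y\<in>{i,j,k}. (y, x) \<in> q)"

definition ranked_first :: "nat rel \<Rightarrow> nat \<Rightarrow> nat \<Rightarrow> nat \<Rightarrow> nat \<Rightarrow> bool" where
  "ranked_first q x i j k \<longleftrightarrow> (\<forall>y\<in>{i,j,k}. (x, y) \<in> q)"

definition f :: "nat \<Rightarrow> nat set \<Rightarrow> nat" where
  "f m B = card {q. linear_order_on {1..m} q \<and>
     (\<forall>i j k. 1 \<le> i \<and> i < j \<and> j < k \<and> k \<le> m \<longrightarrow>
        (j \<in> B \<longrightarrow> \<not> ranked_last q i i j k) \<and>
        (j \<notin> B \<longrightarrow> \<not> ranked_first q k i j k))}"

end

theory Submission
  imports Defs
begin

definition valid :: "nat \<Rightarrow> nat set \<Rightarrow> nat rel \<Rightarrow> bool" where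
  "valid m B q \<longleftrightarrow> (\<forall>i j k. 1 \<le> i \<and> i < j \<and> j < k \<and> k \<le> m \<longrightarrow>
        (j \<in> B \<longrightarrow> \<not> ranked_last q i i j k) \<and>
        (j \<notin> B \<longrightarrow> \<not> ranked_first q k i j k))"

definition VV :: "nat \<Rightarrow> nat set \<Rightarrow> nat rel set" where
  "VV m B = {q. linear_order_on {1..m} q \<and> valid m B q}"

lemma f_VV: "f m B = card (VV m B)"
  unfolding f_def VV_def valid_def by simp

lemma finite_VV: "finite (VV m B)"
proof -
  have "VV m B \<subseteq> Pow ({1..m} \<times> {1..m})"
    unfolding VV_def linear_order_on_def partial_order_on_def preorder_on_def refl_on_def
    by auto
  then show ?thesis by (rule finite_subset) simp
qed

definition hh :: "nat \<Rightarrow> nat \<Rightarrow> nat" where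
  "hh n x = (if x = n - 1 then n else x)"

definition phi :: "nat \<Rightarrow> nat rel \<Rightarrow> nat rel" where
  "phi n q = {(x,y). x \<in> {1..n} \<and> y \<in> {1..n} \<and> (hh n x, hh n y) \<in> q \<and> \<not> (x = n \<and> y = n - 1)}"

definition MM :: "nat \<Rightarrow> nat rel \<Rightarrow> bool" where
  "MM n q \<longleftrightarrow> (n, n - 1) \<in> q \<and> (\<exists>x\<in>{1..n}. x \<noteq> n - 1 \<and> x \<noteq> n \<and> (n, x) \<in> q)"

definition Phi :: "nat \<Rightarrow> nat rel \<Rightarrow> nat rel" where
  "Phi n q = (if MM n q then phi n q else q)"

lemma lin_unfold:
  "linear_order_on S q \<longleftrightarrow> q \<subseteq> S \<times> S \<and> (\<forall>x\<in>S. (x,x) \<in> q) \<and>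
     (\<forall>x y z. (x,y) \<in> q \<longrightarrow> (y,z) \<in> q \<longrightarrow> (x,z) \<in> q) \<and>
     (\<forall>x y. (x,y) \<in> q \<longrightarrow> (y,x) \<in> q \<longrightarrow> x = y) \<and>
     (\<forall>x\<in>S. \<forall>y\<in>S. x \<noteq> y \<longrightarrow> (x,y) \<in> q \<or> (y,x) \<in> q)"
  unfolding linear_order_on_def partial_order_on_def preorder_on_def refl_on_def
    trans_def antisym_def total_on_def by blast

lemma phi_lin:
  assumes n: "n \<ge> 3" and q: "linear_order_on {1..n} q"
  shows "linear_order_on {1..n} (phi n q)"
proof -
  have hS: "x \<in> {1..n} \<Longrightarrow> hh n x \<in> {1..n}" for x using n by (auto simp: hh_def)
  have heq: "hh n x = hh n y \<Longrightarrow> x = y \<or> (x = n - 1 \<and> y = n) \<or> (x = n \<and> y = n - 1)" for x y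
    by (auto simp: hh_def split: if_splits)
  have Qs: "q \<subseteq> {1..n} \<times> {1..n}" and Qr: "\<And>x. x\<in>{1..n} \<Longrightarrow> (x,x) \<in> q"
    and Qt: "\<And>x y z. (x,y) \<in> q \<Longrightarrow> (y,z) \<in> q \<Longrightarrow> (x,z) \<in> q"
    and Qa: "\<And>x y. (x,y) \<in> q \<Longrightarrow> (y,x) \<in> q \<Longrightarrow> x = y"
    and Qto: "\<And>x y. x\<in>{1..n} \<Longrightarrow> y\<in>{1..n} \<Longrightarrow> x \<noteq> y \<Longrightarrow> (x,y) \<in> q \<or> (y,x) \<in> q"
    using q unfolding lin_unfold by blast+
  have mem: "(x,y) \<in> phi n q \<longleftrightarrow> x \<in> {1..n} \<and> y \<in> {1..n} \<and> (hh n x, hh n y) \<in> q \<and> \<not> (x = n \<and> y = n - 1)" for x y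
    unfolding phi_def by simp
  show ?thesis unfolding lin_unfold
  proof (intro conjI allI ballI impI)
    show "phi n q \<subseteq> {1..n} \<times> {1..n}" unfolding phi_def by auto
  next
    fix x assume x: "x \<in> {1..n}" 
    have "x = n \<longrightarrow> x \<noteq> n - 1" using n by auto
    then show "(x,x) \<in> phi n q" unfolding mem using x hS Qr by blast
  next
    fix x y z assume xy: "(x,y) \<in> phi n q" and yz: "(y,z) \<in> phi n q"
    then have 1: "(hh n x, hh n z) \<in> q" using Qt unfolding mem by blast
    have "\<not> (x = n \<and> z = n - 1)"
    proof
      assume c: "x = n \<and> z = n - 1"
      then have "hh n x = n" "hh n z = n" using n by (auto simp: hh_def)
      then have "hh n y = n" using xy yz Qa unfolding mem by metis
      then have "y = n - 1 \<or> y = n" by (auto simp: hh_def split: if_splits)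
      then show False using xy yz c unfolding mem by auto
    qed
    then show "(x,z) \<in> phi n q" using 1 xy yz unfolding mem by blast
  next
    fix x y assume xy: "(x,y) \<in> phi n q" and yx: "(y,x) \<in> phi n q"
    then have "hh n x = hh n y" using Qa unfolding mem by blast
    then show "x = y" using heq xy yx unfolding mem by blast
  next
    fix x y assume x: "x \<in> {1..n}" and y: "y \<in> {1..n}" and ne: "x \<noteq> y"
    show "(x,y) \<in> phi n q \<or> (y,x) \<in> phi n q"
    proof (cases "hh n x = hh n y")
      case True
      then have c: "(x = n - 1 \<and> y = n) \<or> (x = n \<and> y = n - 1)" using heq ne by blast
      have "hh n n = n" "hh n (n-1) = n" using n by (auto simp: hh_def)
      then show ?thesis using c x y Qr unfolding mem by auto
    next
      case False
      then have "(hh n x, hh n y) \<in> q \<or> (hh n y, hh n x) \<in> q" using Qto hS x y by blast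
      moreover have "\<not> (x = n \<and> y = n - 1)" "\<not> (y = n \<and> x = n - 1)"
        using False n by (auto simp: hh_def)
      ultimately show ?thesis using x y unfolding mem by blast
    qed
  qed
qed

lemma valid_iff: "valid m B q \<longleftrightarrow> (\<forall>i j k. 1 \<le> i \<and> i < j \<and> j < k \<and> k \<le> m \<longrightarrow>
        (j \<in> B \<longrightarrow> \<not> ((i,i) \<in> q \<and> (j,i) \<in> q \<and> (k,i) \<in> q)) \<and>
        (j \<notin> B \<longrightarrow> \<not> ((k,i) \<in> q \<and> (k,j) \<in> q \<and> (k,k) \<in> q)))"
  by (simp add: valid_def ranked_last_def ranked_first_def)

lemma lin_facts:
  assumes q: "linear_order_on S q"
  shows "q \<subseteq> S \<times> S" and "\<And>x. x\<in>S \<Longrightarrow> (x,x) \<in> q"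
    and "\<And>x y z. (x,y) \<in> q \<Longrightarrow> (y,z) \<in> q \<Longrightarrow> (x,z) \<in> q"
    and "\<And>x y. (x,y) \<in> q \<Longrightarrow> (y,x) \<in> q \<Longrightarrow> x = y"
    and "\<And>x y. x\<in>S \<Longrightarrow> y\<in>S \<Longrightarrow> x \<noteq> y \<Longrightarrow> (x,y) \<in> q \<or> (y,x) \<in> q"
  using q unfolding lin_unfold by blast+

lemma phi_mem: "(x,y) \<in> phi n q \<longleftrightarrow> x \<in> {1..n} \<and> y \<in> {1..n} \<and> (hh n x, hh n y) \<in> q \<and> \<not> (x = n \<and> y = n - 1)"
  unfolding phi_def by simp

lemma a_max:
  assumes n: "n \<ge> 3" and q: "linear_order_on {1..n} q" and v: "valid n A q"
    and a: "n - 1 \<in> A" and ba: "(n, n-1) \<in> q" and x: "x \<in> {1..n}"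
  shows "(x, n-1) \<in> q"
proof -
  note L = lin_facts[OF q]
  consider "x = n - 1" | "x = n" | "x < n - 1" using x by fastforce
  then show ?thesis
  proof cases
    case 1 then show ?thesis using L(2) n by auto
  next
    case 2 then show ?thesis using ba by simp
  next
    case 3
    have tr: "1 \<le> x \<and> x < n-1 \<and> n-1 < n \<and> n \<le> n" using 3 x n by auto
    have t: "\<not> ((x,x) \<in> q \<and> (n-1,x) \<in> q \<and> (n,x) \<in> q)"
      using v[unfolded valid_iff, rule_format, OF tr] a by blast
    show ?thesis
    proof (rule ccontr)
      assume c: "(x, n-1) \<notin> q"
      have "n - 1 \<in> {1..n}" using n by auto
      then have "(n-1, x) \<in> q" using L(5)[of x "n-1"] c x 3 by auto
      then show False using t L(2)[OF x] L(3)[OF ba] by blast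
    qed
  qed
qed

lemma phi_valid:
  assumes n: "n \<ge> 3" and q: "linear_order_on {1..n} q" and v: "valid n A q"
  shows "valid n (A - {n-1}) (phi n q)"
  unfolding valid_iff
proof (intro allI impI)
  fix i j k assume ijk: "1 \<le> i \<and> i < j \<and> j < k \<and> k \<le> n"
  show "(j \<in> A - {n - 1} \<longrightarrow> \<not> ((i, i) \<in> phi n q \<and> (j, i) \<in> phi n q \<and> (k, i) \<in> phi n q)) \<and>
        (j \<notin> A - {n - 1} \<longrightarrow> \<not> ((k, i) \<in> phi n q \<and> (k, j) \<in> phi n q \<and> (k, k) \<in> phi n q))"
  proof (cases "j = n - 1")
    case True
    then have "k = n" using ijk by auto
    then have "(k, j) \<notin> phi n q" using True unfolding phi_mem by auto
    then show ?thesis using True by auto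
  next
    case False
    then have jl: "j < n - 1" using ijk by auto
    have hi: "hh n i = i" "hh n j = j" using jl ijk by (auto simp: hh_def)
    define k' where "k' = hh n k"
    have k': "j < k'" "k' \<le> n" using ijk n jl by (auto simp: k'_def hh_def)
    have V: "(j \<in> A \<longrightarrow> \<not> ((i,i) \<in> q \<and> (j,i) \<in> q \<and> (k',i) \<in> q)) \<and>
        (j \<notin> A \<longrightarrow> \<not> ((k',i) \<in> q \<and> (k',j) \<in> q \<and> (k',k') \<in> q))"
      using v ijk k' unfolding valid_iff by blast
    have m: "(x,y) \<in> phi n q \<Longrightarrow> (hh n x, hh n y) \<in> q" for x y unfolding phi_mem by blast
    have "(i,i) \<in> phi n q \<Longrightarrow> (i,i) \<in> q" "(j,i) \<in> phi n q \<Longrightarrow> (j,i) \<in> q"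
      "(k,i) \<in> phi n q \<Longrightarrow> (k',i) \<in> q" "(k,j) \<in> phi n q \<Longrightarrow> (k',j) \<in> q"
      "(k,k) \<in> phi n q \<Longrightarrow> (k',k') \<in> q"
      using m[of i i] m[of j i] m[of k i] m[of k j] m[of k k] hi k'_def by auto
    then show ?thesis using V False by blast
  qed
qed

lemma id_valid:
  assumes n: "n \<ge> 3" and q: "linear_order_on {1..n} q" and v: "valid n A q"
    and nm: "\<not> MM n q"
  shows "valid n (A - {n-1}) q"
  unfolding valid_iff
proof (intro allI impI)
  fix i j k assume ijk: "1 \<le> i \<and> i < j \<and> j < k \<and> k \<le> n"
  show "(j \<in> A - {n - 1} \<longrightarrow> \<not> ((i, i) \<in> q \<and> (j, i) \<in> q \<and> (k, i) \<in> q)) \<and>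
        (j \<notin> A - {n - 1} \<longrightarrow> \<not> ((k, i) \<in> q \<and> (k, j) \<in> q \<and> (k, k) \<in> q))"
  proof (cases "j = n - 1")
    case True
    then have "k = n" using ijk by auto
    moreover have "i \<in> {1..n}" "i \<noteq> n - 1" "i \<noteq> n" using ijk True by auto
    ultimately show ?thesis using True nm unfolding MM_def by blast
  next
    case False
    then show ?thesis using v ijk unfolding valid_iff by blast
  qed
qed

lemma phi_recover:
  assumes n: "n \<ge> 3" and q: "linear_order_on {1..n} q" and v: "valid n A q"
    and a: "n - 1 \<in> A" and ba: "(n, n-1) \<in> q"
  shows "q = {(x,y). x \<in> {1..n} \<and> y \<in> {1..n} \<and> (if y = n - 1 then True else if x = n - 1 then False else (x,y) \<in> phi n q)}"
proof -
  note L = lin_facts[OF q]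
  have amax: "x \<in> {1..n} \<Longrightarrow> (x, n-1) \<in> q" for x using a_max[OF n q v a ba] .
  have an: "n - 1 \<in> {1..n}" using n by auto
  have "(x,y) \<in> q \<longleftrightarrow> x \<in> {1..n} \<and> y \<in> {1..n} \<and> (if y = n - 1 then True else if x = n - 1 then False else (x,y) \<in> phi n q)" for x y
  proof (cases "y = n - 1")
    case True then show ?thesis using amax L(1) by auto
  next
    case yF: False
    show ?thesis
    proof (cases "x = n - 1")
      case True
      have "(x,y) \<notin> q"
      proof
        assume "(x,y) \<in> q"
        moreover have "y \<in> {1..n}" using calculation L(1) by auto
        ultimately show False using amax True yF L(4) by blast
      qed
      then show ?thesis using True yF by auto
    next
      case False
      then have "hh n x = x" "hh n y = y" using yF by (auto simp: hh_def)
      then show ?thesis using False yF L(1) unfolding phi_mem by auto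
    qed
  qed
  then show ?thesis by (intro set_eqI) (simp only: split_paired_all mem_Collect_eq case_prod_conv)
qed

lemma Phi_inj:
  assumes n: "n \<ge> 3" and a: "n - 1 \<in> A"
  shows "inj_on (Phi n) (VV n A)"
proof -
  have cross: False if q1: "q1 \<in> VV n A" and q2: "q2 \<in> VV n A" and m1: "MM n q1" and m2: "\<not> MM n q2"
    and eq: "phi n q1 = q2" for q1 q2
  proof -
    have l1: "linear_order_on {1..n} q1" and l2: "linear_order_on {1..n} q2" and v2: "valid n A q2"
      using q1 q2 unfolding VV_def by auto
    obtain x where x: "x \<in> {1..n}" "x \<noteq> n - 1" "x \<noteq> n" "(n, x) \<in> q1" using m1 unfolding MM_def by blast
    have hn: "hh n n = n" "hh n (n-1) = n" "hh n x = x" using n x by (auto simp: hh_def)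
    have "(n, x) \<in> phi n q1" unfolding phi_mem using x hn n by auto
    then have "(n, x) \<in> q2" using eq by simp
    moreover have "(n-1, n) \<in> phi n q1" unfolding phi_mem using hn lin_facts(2)[OF l1, of n] n by auto
    moreover have "(n-1, n) \<in> q2" using calculation eq by simp
    ultimately have "(n-1, x) \<in> q2" using lin_facts(3)[OF l2] by blast
    moreover have "(x,x) \<in> q2" using lin_facts(2)[OF l2] x by blast
    moreover have "x < n - 1" using x by auto
    ultimately have tr: "1 \<le> x \<and> x < n-1 \<and> n-1 < n \<and> n \<le> n" 
      and c: "(x,x) \<in> q2 \<and> (n-1,x) \<in> q2" using x n by auto
    show False using v2[unfolded valid_iff, rule_format, OF tr] a c `(n, x) \<in> q2` by blast
  qed
  show ?thesis
  proof (rule inj_onI)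
    fix q1 q2 assume q1: "q1 \<in> VV n A" and q2: "q2 \<in> VV n A" and eq: "Phi n q1 = Phi n q2"
    have l1: "linear_order_on {1..n} q1" and v1: "valid n A q1"
      and l2: "linear_order_on {1..n} q2" and v2: "valid n A q2"
      using q1 q2 unfolding VV_def by auto
    consider "MM n q1" "MM n q2" | "MM n q1" "\<not> MM n q2" | "\<not> MM n q1" "MM n q2" | "\<not> MM n q1" "\<not> MM n q2"
      by blast
    then show "q1 = q2"
    proof cases
      case 1
      then have "phi n q1 = phi n q2" using eq unfolding Phi_def by simp
      moreover have "(n, n-1) \<in> q1" "(n, n-1) \<in> q2" using 1 unfolding MM_def by auto
      then have r1: "q1 = {(x,y). x \<in> {1..n} \<and> y \<in> {1..n} \<and> (if y = n - 1 then True else if x = n - 1 then False else (x,y) \<in> phi n q1)}"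
        and r2: "q2 = {(x,y). x \<in> {1..n} \<and> y \<in> {1..n} \<and> (if y = n - 1 then True else if x = n - 1 then False else (x,y) \<in> phi n q2)}"
        using phi_recover[OF n l1 v1 a] phi_recover[OF n l2 v2 a] by blast+
      show ?thesis using r1 r2 \<open>phi n q1 = phi n q2\<close> by metis
    next
      case 2
      then show ?thesis using cross[OF q1 q2] eq unfolding Phi_def by simp
    next
      case 3
      then show ?thesis using cross[OF q2 q1] eq unfolding Phi_def by simp
    next
      case 4
      then show ?thesis using eq unfolding Phi_def by simp
    qed
  qed
qed

lemma part1:
  assumes n: "n \<ge> 3" and a: "n - 1 \<in> A"
  shows "f n A \<le> f n (A - {n - 1})"
proof -
  have "Phi n ` VV n A \<subseteq> VV n (A - {n-1})"
  proof
    fix r assume "r \<in> Phi n ` VV n A"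
    then obtain q where q: "q \<in> VV n A" and r: "r = Phi n q" by blast
    have l: "linear_order_on {1..n} q" and v: "valid n A q" using q unfolding VV_def by auto
    show "r \<in> VV n (A - {n-1})"
    proof (cases "MM n q")
      case True
      then show ?thesis using r phi_lin[OF n l] phi_valid[OF n l v] unfolding Phi_def VV_def by simp
    next
      case False
      then show ?thesis using r l id_valid[OF n l v False] unfolding Phi_def VV_def by simp
    qed
  qed
  then show ?thesis unfolding f_VV using card_inj_on_le[OF Phi_inj[OF n a] _ finite_VV] by blast
qed

definition rr :: "nat \<Rightarrow> nat \<Rightarrow> nat" where "rr n x = Suc n - x"

definition rho :: "nat \<Rightarrow> nat rel \<Rightarrow> nat rel" where
  "rho n q = {(x,y). x \<in> {1..n} \<and> y \<in> {1..n} \<and> (rr n y, rr n x) \<in> q}"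

definition cmp :: "nat \<Rightarrow> nat set \<Rightarrow> nat set" where
  "cmp n B = {j. rr n j \<notin> B}"

lemma rr_S: "x \<in> {1..n} \<Longrightarrow> rr n x \<in> {1..n}" by (auto simp: rr_def)
lemma rr_rr: "x \<in> {1..n} \<Longrightarrow> rr n (rr n x) = x" by (auto simp: rr_def)
lemma rr_inj: "x \<in> {1..n} \<Longrightarrow> y \<in> {1..n} \<Longrightarrow> rr n x = rr n y \<Longrightarrow> x = y" by (auto simp: rr_def)

lemma rho_mem: "(x,y) \<in> rho n q \<longleftrightarrow> x \<in> {1..n} \<and> y \<in> {1..n} \<and> (rr n y, rr n x) \<in> q"
  unfolding rho_def by simp

lemma rho_lin:
  assumes q: "linear_order_on {1..n} q"
  shows "linear_order_on {1..n} (rho n q)"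
proof -
  note L = lin_facts[OF q]
  show ?thesis unfolding lin_unfold
  proof (intro conjI allI ballI impI)
    show "rho n q \<subseteq> {1..n} \<times> {1..n}" unfolding rho_def by auto
  next
    fix x assume x: "x \<in> {1..n}" then show "(x,x) \<in> rho n q" unfolding rho_mem using L(2) rr_S by blast
  next
    fix x y z assume "(x,y) \<in> rho n q" "(y,z) \<in> rho n q"
    then show "(x,z) \<in> rho n q" unfolding rho_mem using L(3) by blast
  next
    fix x y assume "(x,y) \<in> rho n q" "(y,x) \<in> rho n q"
    then show "x = y" unfolding rho_mem using L(4) rr_inj by blast
  next
    fix x y assume x: "x \<in> {1..n}" and y: "y \<in> {1..n}" and ne: "x \<noteq> y"
    have "rr n x \<noteq> rr n y" using rr_inj x y ne by blast
    then show "(x,y) \<in> rho n q \<or> (y,x) \<in> rho n q" unfolding rho_mem using L(5) rr_S x y by blast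
  qed
qed

lemma rho_valid:
  assumes q: "linear_order_on {1..n} q" and v: "valid n (cmp n B) q"
  shows "valid n B (rho n q)"
  unfolding valid_iff
proof (intro allI impI)
  fix i j k assume ijk: "1 \<le> i \<and> i < j \<and> j < k \<and> k \<le> n"
  define i' where "i' = rr n k"
  define j' where "j' = rr n j"
  define k' where "k' = rr n i"
  have tr: "1 \<le> i' \<and> i' < j' \<and> j' < k' \<and> k' \<le> n" using ijk by (auto simp: i'_def j'_def k'_def rr_def)
  have jj: "j' \<in> cmp n B \<longleftrightarrow> j \<notin> B" unfolding cmp_def j'_def using rr_rr[of j n] ijk by auto
  have S: "i \<in> {1..n}" "j \<in> {1..n}" "k \<in> {1..n}" using ijk by auto
  note V = v[unfolded valid_iff, rule_format, OF tr]
  show "(j \<in> B \<longrightarrow> \<not> ((i, i) \<in> rho n q \<and> (j, i) \<in> rho n q \<and> (k, i) \<in> rho n q)) \<and>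
        (j \<notin> B \<longrightarrow> \<not> ((k, i) \<in> rho n q \<and> (k, j) \<in> rho n q \<and> (k, k) \<in> rho n q))"
    using V jj S unfolding rho_mem i'_def j'_def k'_def by blast
qed

lemma rho_inj: "inj_on (rho n) (VV n B)"
proof (rule inj_onI)
  fix q1 q2 assume q1: "q1 \<in> VV n B" and q2: "q2 \<in> VV n B" and eq: "rho n q1 = rho n q2"
  have s1: "q1 \<subseteq> {1..n} \<times> {1..n}" and s2: "q2 \<subseteq> {1..n} \<times> {1..n}"
    using q1 q2 lin_facts(1) unfolding VV_def by auto
  have key: "(x,y) \<in> q \<longleftrightarrow> x \<in> {1..n} \<and> y \<in> {1..n} \<and> (rr n y, rr n x) \<in> rho n q"
    if s: "q \<subseteq> {1..n} \<times> {1..n}" for x y q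
  proof
    assume xy: "(x,y) \<in> q"
    then have x: "x \<in> {1..n}" and y: "y \<in> {1..n}" using s by auto
    show "x \<in> {1..n} \<and> y \<in> {1..n} \<and> (rr n y, rr n x) \<in> rho n q"
      unfolding rho_mem using x y xy rr_S[OF x] rr_S[OF y] rr_rr[OF x] rr_rr[OF y] by simp
  next
    assume h: "x \<in> {1..n} \<and> y \<in> {1..n} \<and> (rr n y, rr n x) \<in> rho n q"
    then have x: "x \<in> {1..n}" and y: "y \<in> {1..n}" by auto
    show "(x,y) \<in> q" using h unfolding rho_mem using rr_rr[OF x] rr_rr[OF y] by simp
  qed
  have "(x,y) \<in> q1 \<longleftrightarrow> (x,y) \<in> q2" for x y
    using key[OF s1, of x y] key[OF s2, of x y] eq by simp
  then show "q1 = q2" by auto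
qed

lemma f_cmp_le: "f n (cmp n B) \<le> f n B"
proof -
  have "rho n ` VV n (cmp n B) \<subseteq> VV n B"
    using rho_lin rho_valid unfolding VV_def by blast
  then show ?thesis unfolding f_VV using card_inj_on_le[OF rho_inj _ finite_VV] by blast
qed

lemma f_cong:
  assumes "\<And>j. j \<in> {1..n} \<Longrightarrow> (j \<in> B \<longleftrightarrow> j \<in> C)"
  shows "f n B = f n C"
proof -
  have "valid n B q = valid n C q" for q
    unfolding valid_def using assms by (intro iff_allI) (metis (no_types, lifting) atLeastAtMost_iff less_imp_le_nat order.strict_trans2 le_trans Suc_leI)
  then show ?thesis unfolding f_VV VV_def by simp
qed

theorem corollary2:
  fixes n :: nat and A :: "nat set"
  assumes "n \<ge> 3" and "A \<subseteq> {1..n}"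
  shows "(n - 1 \<in> A \<longrightarrow> f n (A - {n - 1}) \<ge> f n A)
       \<and> (2 \<notin> A \<longrightarrow> f n (A \<union> {2}) \<ge> f n A)"
proof (intro conjI impI)
  assume "n - 1 \<in> A"
  then show "f n (A - {n - 1}) \<ge> f n A" using part1 assms(1) by blast
next
  assume a2: "2 \<notin> A"
  define A2 where "A2 = cmp n A"
  have "rr n (n - 1) = 2" using assms(1) by (simp add: rr_def)
  then have "n - 1 \<in> A2" using a2 unfolding A2_def cmp_def by simp
  then have 1: "f n A2 \<le> f n (A2 - {n - 1})" using part1 assms(1) by blast
  have "f n A = f n (cmp n A2)" unfolding A2_def cmp_def
    by (rule f_cong) (simp add: rr_rr)
  also have "\<dots> \<le> f n A2" by (rule f_cmp_le)
  finally have 2: "f n A \<le> f n A2" .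
  have "A2 - {n - 1} = cmp n (A \<union> {2})" unfolding A2_def cmp_def rr_def using assms(1) by auto
  then have "f n (A2 - {n - 1}) \<le> f n (A \<union> {2})" using f_cmp_le by simp
  then show "f n (A \<union> {2}) \<ge> f n A" using 1 2 by linarith
qed

end
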